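(* Let $n\ge0$, $a_{n,0},\dots,a_{n,n}\in\mathbb C$, and let $P_n(z)=\sum_{r=0}^n b_{n,r}z^r$ be the associated polynomial. Then all coefficients $b_{n,r}$ are real if and only if $a_{n,k}=\overline{a_{n,n-k}}$ for all $0\le k\le n$ (bar denoting complex conjugation).
   Context: $\imath=\sqrt{-1}$. $\mathcal{A}$ denotes the quotient of the free associative $\mathbb{C}$-algebra on two noncommuting generators $p,q$ by the two-sided ideal generated by $qp-pq-\imath$, and $z=\tfrac12(qp+pq)\in\mathcal A$. For $n\ge0$ and complex numbers $a_{n,0},\dots,a_{n,n}$, there is a unique polynomial $P_n\in\mathbb{C}[X]$ of degree at most $n$ with $\sum_{k=0}^n a_{n,k}q^kp^nq^{n-k}=P_n(z)$ in $\mathcal A$; it is called the polynomial associated to $\{a_{n,k}\}$. *)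

theory Defs
  imports "HOL-Computational_Algebra.Polynomial"
begin

text \<open>The free associative C-algebra on two generators p, q: an element is a
coefficient function on words (lists of letters; False = p, True = q) with finite support.\<close>

type_synonym fa = "bool list \<Rightarrow> complex"

definition free_alg :: "fa set" where
  "free_alg = {f. finite {w. f w \<noteq> 0}}"

definition fa_mul :: "fa \<Rightarrow> fa \<Rightarrow> fa" where
  "fa_mul f g = (\<lambda>w. \<Sum>k\<le>length w. f (take k w) * g (drop k w))"

definition fa_const :: "complex \<Rightarrow> fa" where
  "fa_const c = (\<lambda>w. if w = [] then c else 0)"

definition fa_p :: fa where "fa_p = (\<lambda>w. if w = [False] then 1 else 0)"
definition fa_q :: fa where "fa_q = (\<lambda>w. if w = [True] then 1 else 0)"

definition fa_pow :: "fa \<Rightarrow> nat \<Rightarrow> fa" where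
  "fa_pow f n = ((fa_mul f) ^^ n) (fa_const 1)"

definition weyl_rel :: fa where
  "weyl_rel = (\<lambda>w. fa_mul fa_q fa_p w - fa_mul fa_p fa_q w - fa_const \<i> w)"

inductive_set weyl_ideal :: "fa set" where
  gen: "weyl_rel \<in> weyl_ideal"
| zero: "(\<lambda>w. 0) \<in> weyl_ideal"
| add: "x \<in> weyl_ideal \<Longrightarrow> y \<in> weyl_ideal \<Longrightarrow> (\<lambda>w. x w + y w) \<in> weyl_ideal"
| lmul: "a \<in> free_alg \<Longrightarrow> x \<in> weyl_ideal \<Longrightarrow> fa_mul a x \<in> weyl_ideal"
| rmul: "a \<in> free_alg \<Longrightarrow> x \<in> weyl_ideal \<Longrightarrow> fa_mul x a \<in> weyl_ideal"

definition weyl_eq :: "fa \<Rightarrow> fa \<Rightarrow> bool" where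
  "weyl_eq x y \<longleftrightarrow> (\<lambda>w. x w - y w) \<in> weyl_ideal"

definition weyl_z :: fa where
  "weyl_z = (\<lambda>w. (fa_mul fa_q fa_p w + fa_mul fa_p fa_q w) / 2)"

definition poly_at_z :: "complex poly \<Rightarrow> fa" where
  "poly_at_z P = (\<lambda>w. \<Sum>r\<le>degree P. coeff P r * fa_pow weyl_z r w)"

definition weyl_sum :: "nat \<Rightarrow> (nat \<Rightarrow> complex) \<Rightarrow> fa" where
  "weyl_sum n a = (\<lambda>w. \<Sum>k\<le>n. a k *
      fa_mul (fa_mul (fa_pow fa_q k) (fa_pow fa_p n)) (fa_pow fa_q (n - k)) w)"

definition is_assoc_poly :: "nat \<Rightarrow> (nat \<Rightarrow> complex) \<Rightarrow> complex poly \<Rightarrow> bool" where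
  "is_assoc_poly n a P \<longleftrightarrow> degree P \<le> n \<and> weyl_eq (weyl_sum n a) (poly_at_z P)"

end

theory Submission
  imports Defs
begin

definition Qop :: "(nat \<Rightarrow> complex) \<Rightarrow> nat \<Rightarrow> complex" where
  "Qop c = (\<lambda>j. if j = 0 then 0 else c (j - 1))"
definition Pop :: "(nat \<Rightarrow> complex) \<Rightarrow> nat \<Rightarrow> complex" where
  "Pop c = (\<lambda>j. - \<i> * of_nat (Suc j) * c (Suc j))"

fun Rw :: "bool list \<Rightarrow> (nat \<Rightarrow> complex) \<Rightarrow> nat \<Rightarrow> complex" where
  "Rw [] c = c"
| "Rw (b # w) c = (if b then Qop else Pop) (Rw w c)"

lemma Rw_sum: "Rw w (\<lambda>j. \<Sum>x\<in>A. g x j) = (\<lambda>j. \<Sum>x\<in>A. Rw w (g x) j)"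
  by (induction w) (auto simp: Qop_def Pop_def fun_eq_iff sum_distrib_left)

lemma Rw_scale: "Rw w (\<lambda>j. \<alpha> * g j) = (\<lambda>j. \<alpha> * Rw w g j)"
  by (induction w) (auto simp: Qop_def Pop_def fun_eq_iff)

lemma Rw_zero: "Rw w (\<lambda>j. 0) = (\<lambda>j. 0)"
  by (induction w) (auto simp: Qop_def Pop_def fun_eq_iff)

lemma Rw_append: "Rw (u @ v) c = Rw u (Rw v c)"
  by (induction u) auto

definition supp :: "fa \<Rightarrow> bool list set" where "supp f = {w. f w \<noteq> 0}"

definition rho :: "fa \<Rightarrow> (nat \<Rightarrow> complex) \<Rightarrow> nat \<Rightarrow> complex" where
  "rho f c j = (\<Sum>w\<in>supp f. f w * Rw w c j)"

lemma rho_superset: "finite A \<Longrightarrow> supp f \<subseteq> A \<Longrightarrow> rho f c j = (\<Sum>w\<in>A. f w * Rw w c j)"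
  unfolding rho_def by (rule sum.mono_neutral_left) (auto simp: supp_def)

lemma supp_mul: "supp (fa_mul f g) \<subseteq> (\<lambda>(u,v). u @ v) ` (supp f \<times> supp g)"
proof
  fix w assume "w \<in> supp (fa_mul f g)"
  then have "(\<Sum>k\<le>length w. f (take k w) * g (drop k w)) \<noteq> 0"
    by (simp add: supp_def fa_mul_def)
  then obtain k where "f (take k w) * g (drop k w) \<noteq> 0"
    by (meson sum.neutral)
  then have "(take k w, drop k w) \<in> supp f \<times> supp g" by (simp add: supp_def)
  then show "w \<in> (\<lambda>(u,v). u @ v) ` (supp f \<times> supp g)"
    by (metis (no_types, lifting) append_take_drop_id case_prod_conv image_eqI)
qed

lemma fin_mul: "finite (supp f) \<Longrightarrow> finite (supp g) \<Longrightarrow> finite (supp (fa_mul f g))"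
  by (rule finite_subset[OF supp_mul]) auto

lemma rho_mul:
  assumes ff: "finite (supp f)" and fg: "finite (supp g)"
  shows "rho (fa_mul f g) c j = rho f (rho g c) j"
proof -
  define S where "S = supp f"
  define T where "T = supp g"
  define U where "U = (\<lambda>(u,v). u @ v) ` (S \<times> T)"
  define F where "F = (\<lambda>(u::bool list, v::bool list). f u * g v * Rw (u @ v) c j)"
  define h where "h = (\<lambda>(w::bool list, k::nat). (take k w, drop k w))"
  define Sig where "Sig = Sigma U (\<lambda>w. {..length w})"
  have fS: "finite S" "finite T" using ff fg S_def T_def by auto
  have fU: "finite U" unfolding U_def using fS by auto
  have fSig: "finite Sig" unfolding Sig_def using fU by auto
  have "rho (fa_mul f g) c j = (\<Sum>w\<in>U. fa_mul f g w * Rw w c j)"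
    by (rule rho_superset) (use fU supp_mul in \<open>auto simp: U_def S_def T_def\<close>)
  also have "\<dots> = (\<Sum>w\<in>U. \<Sum>k\<le>length w. F (h (w, k)))"
    by (rule sum.cong) (auto simp: fa_mul_def sum_distrib_right F_def h_def)
  also have "\<dots> = (\<Sum>(w,k)\<in>Sig. F (h (w,k)))"
    unfolding Sig_def by (rule sum.Sigma) (use fU in auto)
  also have "\<dots> = (\<Sum>p\<in>h ` Sig. F p)"
  proof -
    have "inj_on h Sig"
    proof (rule inj_onI)
      fix x y assume "x \<in> Sig" "y \<in> Sig" "h x = h y"
      then obtain w k w' k' where x: "x = (w,k)" "k \<le> length w" and y: "y = (w',k')" "k' \<le> length w'"
        and e: "take k w = take k' w'" "drop k w = drop k' w'"
        by (cases x, cases y) (auto simp: Sig_def h_def)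
      have "w = w'" using e by (metis append_take_drop_id)
      moreover have "k = k'" using e x y
        by (metis length_take min.absorb2)
      ultimately show "x = y" using x y by simp
    qed
    then show ?thesis by (simp add: sum.reindex case_prod_unfold)
  qed
  also have "\<dots> = (\<Sum>p\<in>S \<times> T. F p)"
  proof (rule sum.mono_neutral_right)
    show "finite (h ` Sig)" using fSig by auto
    show "S \<times> T \<subseteq> h ` Sig"
    proof
      fix p assume "p \<in> S \<times> T"
      then obtain u v where p: "p = (u,v)" "u \<in> S" "v \<in> T" by auto
      then have "(u @ v, length u) \<in> Sig" by (auto simp: Sig_def U_def)
      moreover have "h (u @ v, length u) = p" by (simp add: h_def p)
      ultimately show "p \<in> h ` Sig" by force
    qed
    show "\<forall>i\<in>h ` Sig - S \<times> T. F i = 0"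
      by (auto simp: F_def S_def T_def supp_def)
  qed
  also have "\<dots> = (\<Sum>u\<in>S. \<Sum>v\<in>T. f u * (g v * Rw u (Rw v c) j))"
    by (simp add: sum.cartesian_product F_def Rw_append mult.assoc)
  also have "\<dots> = rho f (rho g c) j"
    unfolding rho_def S_def T_def
    by (simp add: Rw_sum Rw_scale sum_distrib_left)
  finally show ?thesis .
qed

lemma supp_add: "supp (\<lambda>w. x w + y w) \<subseteq> supp x \<union> supp y"
  by (auto simp: supp_def)
lemma supp_diff: "supp (\<lambda>w. x w - y w) \<subseteq> supp x \<union> supp y"
  by (auto simp: supp_def)
lemma supp_scale: "supp (\<lambda>w. \<alpha> * x w) \<subseteq> supp x"
  by (auto simp: supp_def)
lemma supp_div: "supp (\<lambda>w. x w / 2) \<subseteq> supp x"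
  by (auto simp: supp_def)
lemma supp_sum: "supp (\<lambda>w. \<Sum>k\<in>A. F k w) \<subseteq> (\<Union>k\<in>A. supp (F k))"
  by (auto simp: supp_def intro: ccontr dest: sum.not_neutral_contains_not_neutral)

lemma fin_add: "finite (supp x) \<Longrightarrow> finite (supp y) \<Longrightarrow> finite (supp (\<lambda>w. x w + y w))"
  by (rule finite_subset[OF supp_add]) auto
lemma fin_diff: "finite (supp x) \<Longrightarrow> finite (supp y) \<Longrightarrow> finite (supp (\<lambda>w. x w - y w))"
  by (rule finite_subset[OF supp_diff]) auto
lemma fin_scale: "finite (supp x) \<Longrightarrow> finite (supp (\<lambda>w. \<alpha> * x w))"
  by (rule finite_subset[OF supp_scale]) auto
lemma fin_div: "finite (supp x) \<Longrightarrow> finite (supp (\<lambda>w. x w / 2))"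
  by (rule finite_subset[OF supp_div]) auto
lemma fin_sum: "finite A \<Longrightarrow> (\<And>k. k \<in> A \<Longrightarrow> finite (supp (F k))) \<Longrightarrow> finite (supp (\<lambda>w. \<Sum>k\<in>A. F k w))"
  by (rule finite_subset[OF supp_sum]) auto

lemma rho_add: "finite (supp x) \<Longrightarrow> finite (supp y) \<Longrightarrow> rho (\<lambda>w. x w + y w) c j = rho x c j + rho y c j"
  using rho_superset[of "supp x \<union> supp y" "\<lambda>w. x w + y w"] rho_superset[of "supp x \<union> supp y" x]
    rho_superset[of "supp x \<union> supp y" y] supp_add[of x y]
  by (simp add: sum.distrib distrib_right)
lemma rho_diff: "finite (supp x) \<Longrightarrow> finite (supp y) \<Longrightarrow> rho (\<lambda>w. x w - y w) c j = rho x c j - rho y c j"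
  using rho_superset[of "supp x \<union> supp y" "\<lambda>w. x w - y w"] rho_superset[of "supp x \<union> supp y" x]
    rho_superset[of "supp x \<union> supp y" y] supp_diff[of x y]
  by (simp add: sum_subtractf left_diff_distrib)
lemma rho_scale: "finite (supp x) \<Longrightarrow> rho (\<lambda>w. \<alpha> * x w) c j = \<alpha> * rho x c j"
  using rho_superset[of "supp x" "\<lambda>w. \<alpha> * x w"] rho_superset[of "supp x" x] supp_scale[of \<alpha> x]
  by (simp add: sum_distrib_left mult.assoc)
lemma rho_div: "finite (supp x) \<Longrightarrow> rho (\<lambda>w. x w / 2) c j = rho x c j / 2"
  using rho_superset[of "supp x" "\<lambda>w. x w / 2"] rho_superset[of "supp x" x] supp_div[of x]
  by (simp add: sum_divide_distrib)
lemma rho_zero: "rho (\<lambda>w. 0) c j = 0"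
  by (simp add: rho_def supp_def)
lemma rho_sum: "finite A \<Longrightarrow> (\<And>k. k \<in> A \<Longrightarrow> finite (supp (F k))) \<Longrightarrow>
   rho (\<lambda>w. \<Sum>k\<in>A. F k w) c j = (\<Sum>k\<in>A. rho (F k) c j)"
proof (induction A rule: finite_induct)
  case empty then show ?case by (simp add: rho_zero)
next
  case (insert a A)
  have "rho (\<lambda>w. \<Sum>k\<in>insert a A. F k w) c j = rho (\<lambda>w. F a w + (\<Sum>k\<in>A. F k w)) c j"
    using insert by simp
  also have "\<dots> = rho (F a) c j + rho (\<lambda>w. \<Sum>k\<in>A. F k w) c j"
    by (rule rho_add) (use insert fin_sum in auto)
  finally show ?case using insert by simp
qed

lemma supp_const: "supp (fa_const \<alpha>) \<subseteq> {[]}" by (auto simp: supp_def fa_const_def)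
lemma supp_p: "supp fa_p \<subseteq> {[False]}" by (auto simp: supp_def fa_p_def)
lemma supp_q: "supp fa_q \<subseteq> {[True]}" by (auto simp: supp_def fa_q_def)
lemma fin_const: "finite (supp (fa_const \<alpha>))" by (rule finite_subset[OF supp_const]) auto
lemma fin_p: "finite (supp fa_p)" by (rule finite_subset[OF supp_p]) auto
lemma fin_q: "finite (supp fa_q)" by (rule finite_subset[OF supp_q]) auto

lemma rho_const: "rho (fa_const \<alpha>) c j = \<alpha> * c j"
  using rho_superset[OF _ supp_const] by (simp add: fa_const_def)
lemma rho_p: "rho fa_p c = Pop c"
  using rho_superset[OF _ supp_p] by (simp add: fa_p_def fun_eq_iff)
lemma rho_q: "rho fa_q c = Qop c"
  using rho_superset[OF _ supp_q] by (simp add: fa_q_def fun_eq_iff)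

lemma rho_pf: "rho fa_p = Pop" using rho_p by blast
lemma rho_qf: "rho fa_q = Qop" using rho_q by blast

lemma fin_pow: "finite (supp f) \<Longrightarrow> finite (supp (fa_pow f n))"
  by (induction n) (auto simp: fa_pow_def fin_const fin_mul)

lemma rho_pow: "finite (supp f) \<Longrightarrow> rho (fa_pow f n) c = (rho f ^^ n) c"
proof (induction n arbitrary: c)
  case 0 then show ?case by (simp add: fa_pow_def rho_const fun_eq_iff)
next
  case (Suc n)
  have eq: "fa_pow f (Suc n) = fa_mul f (fa_pow f n)" by (simp add: fa_pow_def)
  have "rho (fa_pow f (Suc n)) c = rho f (rho (fa_pow f n) c)"
    unfolding eq using Suc.prems fin_pow[OF Suc.prems] by (simp add: rho_mul fun_eq_iff)
  then show ?case by (simp add: Suc.IH[OF Suc.prems])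
qed

lemma ideal_kernel: "x \<in> weyl_ideal \<Longrightarrow> finite (supp x) \<and> (\<forall>c j. rho x c j = 0)"
proof (induction rule: weyl_ideal.induct)
  case gen
  have f1: "finite (supp (fa_mul fa_q fa_p))" "finite (supp (fa_mul fa_p fa_q))"
    by (simp_all add: fin_mul fin_p fin_q)
  have fin: "finite (supp weyl_rel)" unfolding weyl_rel_def
    by (intro fin_diff f1 fin_const)
  have "rho weyl_rel c j = 0" for c j
  proof -
    have "rho weyl_rel c j = Qop (Pop c) j - Pop (Qop c) j - \<i> * c j"
      unfolding weyl_rel_def
      by (simp add: rho_diff fin_diff f1 fin_const rho_mul fin_p fin_q rho_p rho_q rho_const)
    also have "\<dots> = 0"
      by (cases j) (simp_all add: Qop_def Pop_def algebra_simps)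
    finally show ?thesis .
  qed
  with fin show ?case by blast
next
  case zero then show ?case by (simp add: supp_def rho_zero)
next
  case (add x y) then show ?case by (simp add: fin_add rho_add)
next
  case (lmul a x)
  then have fa: "finite (supp a)" by (simp add: free_alg_def supp_def)
  have "rho x c = (\<lambda>j. 0)" for c using lmul by auto
  then have "rho (fa_mul a x) c j = 0" for c j using lmul fa
    by (simp add: rho_mul) (simp add: rho_def Rw_zero)
  then show ?case using lmul fa by (simp add: fin_mul)
next
  case (rmul a x)
  then have fa: "finite (supp a)" by (simp add: free_alg_def supp_def)
  have "rho (fa_mul x a) c j = 0" for c j
    using rmul fa by (simp add: rho_mul)
  then show ?case using rmul fa by (simp add: fin_mul)
qed

definition zt :: "nat \<Rightarrow> complex" where "zt j = - \<i> * (of_nat j + 1/2)"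

lemma fin_z: "finite (supp weyl_z)"
  unfolding weyl_z_def by (intro fin_div fin_add fin_mul fin_p fin_q)

lemma rho_z: "rho weyl_z c = (\<lambda>j. zt j * c j)"
proof
  fix j
  have "rho weyl_z c j = (Qop (Pop c) j + Pop (Qop c) j) / 2"
    unfolding weyl_z_def
    by (simp add: rho_div rho_add fin_add fin_mul fin_p fin_q rho_mul rho_p rho_q)
  also have "\<dots> = zt j * c j"
    by (cases j) (simp_all add: Qop_def Pop_def zt_def field_simps)
  finally show "rho weyl_z c j = zt j * c j" .
qed

lemma rho_zpow: "(rho weyl_z ^^ r) c = (\<lambda>j. zt j ^ r * c j)"
  by (induction r) (simp_all add: rho_z fun_eq_iff)

lemma fin_polyz: "finite (supp (poly_at_z P))"
  unfolding poly_at_z_def by (intro fin_sum fin_scale fin_pow fin_z) auto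

lemma rho_polyz: "rho (poly_at_z P) c j = poly P (zt j) * c j"
proof -
  have "rho (poly_at_z P) c j = (\<Sum>r\<le>degree P. coeff P r * rho (fa_pow weyl_z r) c j)"
    unfolding poly_at_z_def
    by (subst rho_sum) (auto intro!: fin_scale fin_pow fin_z sum.cong rho_scale)
  also have "\<dots> = poly P (zt j) * c j"
    by (simp add: rho_pow fin_z rho_zpow poly_altdef sum_distrib_right mult.assoc)
  finally show ?thesis .
qed

lemma Qpow: "(Qop ^^ k) c j = (if k \<le> j then c (j - k) else 0)"
  by (induction k arbitrary: j) (auto simp: Qop_def)

lemma Ppow: "(Pop ^^ n) c j = (\<Prod>m\<in>{1..n}. - \<i> * (of_nat j + of_nat m)) * c (j + n)"
proof (induction n arbitrary: c)
  case 0 then show ?case by simp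
next
  case (Suc n)
  have "(Pop ^^ Suc n) c j = (Pop ^^ n) (Pop c) j" by (simp only: funpow_Suc_right comp_apply)
  also have "\<dots> = (\<Prod>m\<in>{1..n}. - \<i> * (of_nat j + of_nat m)) * (- \<i> * (of_nat j + of_nat (Suc n))) * c (j + Suc n)"
    by (simp add: Suc Pop_def algebra_simps)
  also have "\<dots> = (\<Prod>m\<in>{1..Suc n}. - \<i> * (of_nat j + of_nat m)) * c (j + Suc n)"
    by (simp add: atLeastAtMostSuc_conv mult.commute)
  finally show ?case .
qed

definition E :: "nat \<Rightarrow> nat \<Rightarrow> nat \<Rightarrow> complex" where
  "E n k j = (\<Prod>m\<in>{1..n}. - \<i> * (of_nat j - of_nat k + of_nat m))"

lemma E_zero: "j < k \<Longrightarrow> k \<le> n \<Longrightarrow> E n k j = 0"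
  unfolding E_def
  by (rule prod_zero) (auto intro!: bexI[of _ "k - j"] simp: of_nat_diff)

lemma term_eig: "k \<le> n \<Longrightarrow> (Qop ^^ k) ((Pop ^^ n) ((Qop ^^ (n - k)) c)) j = E n k j * c j"
proof (cases "k \<le> j")
  case True
  assume kn: "k \<le> n"
  have "(Qop ^^ k) ((Pop ^^ n) ((Qop ^^ (n - k)) c)) j = (Pop ^^ n) ((Qop ^^ (n - k)) c) (j - k)"
    using True by (simp add: Qpow)
  also have "\<dots> = E n k j * c j"
    using True kn by (simp add: Ppow Qpow E_def of_nat_diff)
  finally show ?thesis .
next
  case False
  assume "k \<le> n"
  then show ?thesis using False by (simp add: Qpow E_zero)
qed

lemma fin_term: "finite (supp (fa_mul (fa_mul (fa_pow fa_q k) (fa_pow fa_p n)) (fa_pow fa_q (n - k))))"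
  by (intro fin_mul fin_pow fin_p fin_q)

lemma fin_wsum: "finite (supp (weyl_sum n a))"
  unfolding weyl_sum_def by (intro fin_sum fin_scale fin_term) auto

lemma rho_wsum: "rho (weyl_sum n a) c j = (\<Sum>k\<le>n. a k * E n k j) * c j"
proof -
  have "rho (weyl_sum n a) c j = (\<Sum>k\<le>n. a k * rho (fa_mul (fa_mul (fa_pow fa_q k) (fa_pow fa_p n)) (fa_pow fa_q (n - k))) c j)"
    unfolding weyl_sum_def
    by (subst rho_sum) (auto intro!: fin_scale fin_term sum.cong rho_scale)
  also have "\<dots> = (\<Sum>k\<le>n. a k * E n k j * c j)"
    by (rule sum.cong) (auto simp: rho_mul fin_mul fin_pow fin_p fin_q rho_pow rho_pf rho_qf term_eig
        fun_eq_iff)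
  finally show ?thesis by (simp add: sum_distrib_right)
qed

lemma rep:
  assumes "is_assoc_poly n a P"
  shows "(\<Sum>k\<le>n. a k * E n k j) = poly P (zt j)"
proof -
  have "(\<lambda>w. weyl_sum n a w - poly_at_z P w) \<in> weyl_ideal"
    using assms by (simp add: is_assoc_poly_def weyl_eq_def)
  then have "rho (\<lambda>w. weyl_sum n a w - poly_at_z P w) (\<lambda>_. 1) j = 0"
    using ideal_kernel by blast
  then show ?thesis
    by (simp add: rho_diff fin_wsum fin_polyz rho_wsum rho_polyz)
qed

definition B :: "nat \<Rightarrow> nat \<Rightarrow> complex poly" where
  "B n k = (\<Prod>m\<in>{1..n}. [: \<i> * (1/2 + of_nat k - of_nat m), 1 :])"

lemma poly_B: "poly (B n k) x = (\<Prod>m\<in>{1..n}. \<i> * (1/2 + of_nat k - of_nat m) + x)"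
  unfolding B_def poly_prod by simp

lemma B_zt: "poly (B n k) (zt j) = E n k j"
  unfolding poly_B E_def zt_def by (rule prod.cong) (auto simp: algebra_simps)

lemma B_cnj:
  assumes "k \<le> n"
  shows "cnj (poly (B n k) (cnj x)) = poly (B n (n - k)) x"
proof -
  have "cnj (poly (B n k) (cnj x)) = (\<Prod>m\<in>{1..n}. - \<i> * (1/2 + of_nat k - of_nat m) + x)"
    by (simp add: poly_B)
  also have "\<dots> = (\<Prod>m\<in>{1..n}. \<i> * (1/2 + of_nat (n - k) - of_nat (n + 1 - m)) + x)"
    by (rule prod.cong) (use assms in \<open>auto simp: of_nat_diff algebra_simps\<close>)
  also have "\<dots> = poly (B n (n - k)) x"
    unfolding poly_B by (rule prod.atLeastAtMost_rev[symmetric])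
  finally show ?thesis .
qed

lemma poly_cnj: "poly (map_poly cnj P) x = cnj (poly P (cnj x))"
  by (induction P rule: pCons_induct) (simp_all add: map_poly_pCons)

lemma real_iff: "(\<forall>r. coeff P r \<in> \<real>) \<longleftrightarrow> (\<forall>x. cnj (poly P (cnj x)) = poly P x)"
proof -
  have "(\<forall>r. coeff P r \<in> \<real>) \<longleftrightarrow> map_poly cnj P = P"
    by (simp add: poly_eq_iff coeff_map_poly Reals_cnj_iff)
  also have "\<dots> \<longleftrightarrow> poly (map_poly cnj P) = poly P"
    by (simp add: poly_eq_poly_eq_iff)
  also have "\<dots> \<longleftrightarrow> (\<forall>x. cnj (poly P (cnj x)) = poly P x)"
    by (simp add: fun_eq_iff poly_cnj)
  finally show ?thesis .
qed

lemma zt_inj: "inj zt"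
  by (rule injI) (simp add: zt_def)

lemma E_diag: "E n k k \<noteq> 0"
  by (simp add: E_def)

theorem theorem4p3:
  fixes n :: nat and a :: "nat \<Rightarrow> complex" and P :: "complex poly"
  assumes "is_assoc_poly n a P"
  shows "(\<forall>r. coeff P r \<in> \<real>) \<longleftrightarrow> (\<forall>k\<le>n. a k = cnj (a (n - k)))"
proof -
  define D where "D = P - (\<Sum>k\<le>n. smult (a k) (B n k))"
  have Dz: "poly D (zt j) = 0" for j
    using rep[OF assms, of j] by (simp add: D_def poly_sum B_zt)
  have "D = 0"
  proof (rule ccontr)
    assume "D \<noteq> 0"
    then have "finite {x. poly D x = 0}" by (rule poly_roots_finite)
    moreover have "range zt \<subseteq> {x. poly D x = 0}" using Dz by auto
    ultimately have "finite (range zt)" by (rule finite_subset[rotated])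
    then show False using zt_inj range_inj_infinite by blast
  qed
  then have Pexp: "poly P x = (\<Sum>k\<le>n. a k * poly (B n k) x)" for x
    by (simp add: D_def poly_sum)
  have Cexp: "cnj (poly P (cnj x)) = (\<Sum>k\<le>n. cnj (a (n - k)) * poly (B n k) x)" for x
  proof -
    have "cnj (poly P (cnj x)) = (\<Sum>k\<in>{0..n}. cnj (a k) * poly (B n (n - k)) x)"
      by (simp add: Pexp B_cnj atLeast0AtMost)
    also have "\<dots> = (\<Sum>k\<in>{0..n}. cnj (a (n - k)) * poly (B n (n - (n - k))) x)"
      by (subst sum.atLeastAtMost_rev) simp
    also have "\<dots> = (\<Sum>k\<le>n. cnj (a (n - k)) * poly (B n k) x)"
      by (rule sum.cong) auto
    finally show ?thesis .
  qed
  show ?thesis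
  proof
    assume "\<forall>r. coeff P r \<in> \<real>"
    then have H: "(\<Sum>k\<le>n. cnj (a (n - k)) * poly (B n k) x) = (\<Sum>k\<le>n. a k * poly (B n k) x)" for x
      using real_iff Cexp Pexp by metis
    define d where "d k = cnj (a (n - k)) - a k" for k
    have Hd: "(\<Sum>k\<le>n. d k * E n k j) = 0" for j
      using H[of "zt j"] by (simp add: d_def B_zt left_diff_distrib sum_subtractf)
    have "k \<le> n \<longrightarrow> d k = 0" for k
    proof (induction k rule: less_induct)
      case (less k)
      show ?case
      proof
        assume kn: "k \<le> n"
        have "(\<Sum>k'\<le>n. d k' * E n k' k) = d k * E n k k + (\<Sum>k'\<in>{..n} - {k}. d k' * E n k' k)"
          using kn by (subst sum.remove[of _ k]) auto
        also have "(\<Sum>k'\<in>{..n} - {k}. d k' * E n k' k) = 0"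
        proof (rule sum.neutral, rule ballI)
          fix k' assume k': "k' \<in> {..n} - {k}"
          show "d k' * E n k' k = 0"
          proof (cases "k' < k")
            case True then show ?thesis using less.IH kn by auto
          next
            case False then have "k < k'" using k' by auto
            then show ?thesis using k' by (simp add: E_zero)
          qed
        qed
        finally have "d k * E n k k = 0" using Hd[of k] by simp
        then show "d k = 0" using E_diag by simp
      qed
    qed
    then show "\<forall>k\<le>n. a k = cnj (a (n - k))" by (simp add: d_def)
  next
    assume h: "\<forall>k\<le>n. a k = cnj (a (n - k))"
    have "cnj (poly P (cnj x)) = poly P x" for x
    proof -
      have "cnj (poly P (cnj x)) = (\<Sum>k\<le>n. cnj (a (n - k)) * poly (B n k) x)" by (rule Cexp)
      also have "\<dots> = (\<Sum>k\<le>n. a k * poly (B n k) x)" proof (rule sum.cong[OF refl])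
        fix k assume k: "k \<in> {..n}"
        then have e: "a k = cnj (a (n - k))" using h by blast
        show "cnj (a (n - k)) * poly (B n k) x = a k * poly (B n k) x" by (simp only: e)
      qed
      also have "\<dots> = poly P x" by (rule Pexp[symmetric])
      finally show ?thesis .
    qed
    then show "\<forall>r. coeff P r \<in> \<real>" using real_iff by blast
  qed
qed

end
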